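(* Let $u$ be a real solution of the sinh-Gordon equation, fix $a\in\mathbb{C}^*$, let $\psi^{(a)}$ be a solution of (Ψ) and $\varphi^{(a)}$ a solution of (Φ), both at $\lambda=a$, and set $\xi_{ij}=\psi^{(a)}_i\varphi^{(a)}_j$ and $\dot u=\xi_{11}-\xi_{22}$. Let $\lambda\in\mathbb{C}^*\setminus\{a\}$ and let $\psi$ be any solution of (Ψ) at $\lambda$. Then $$\dot\psi:=\frac{1}{\lambda-a}\begin{pmatrix}(\lambda+a)\xi_{11}&2\lambda\,\xi_{12}\\ 2a\,\xi_{21}&(\lambda+a)\xi_{22}\end{pmatrix}\psi$$ solves the linearization of (Ψ) in the direction $\dot u$, namely $$\partial\dot\psi=\tfrac12\begin{pmatrix}\partial u& ie^{-u}\\ i\lambda^{-1}e^{u}&-\partial u\end{pmatrix}\dot\psi+\tfrac12\begin{pmatrix}\partial\dot u&-i\dot u e^{-u}\\ i\dot u\lambda^{-1}e^{u}&-\partial\dot u\end{pmatrix}\psi,$$ $$\bar\partial\dot\psi=\tfrac12\begin{pmatrix}-\bar\partial u& i\lambda e^{u}\\ ie^{-u}&\bar\partial u\end{pmatrix}\dot\psi+\tfrac12\begin{pmatrix}-\bar\partial\dot u& i\dot u\lambda e^{u}\\ -i\dot u e^{-u}&\bar\partial\dot u\end{pmatrix}\psi.$$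
   Context: Coordinates $z$ on $\mathbb{R}^2\cong\mathbb{C}$, $\partial=\partial_z$, $\bar\partial=\partial_{\bar z}$. Sinh-Gordon equation: $\partial\bar\partial u+\tfrac12\sinh(2u)=0$, $u$ real smooth. For $\lambda\in\mathbb{C}^*$, system (Ψ) is $\partial\psi=\tfrac12\begin{pmatrix}\partial u& ie^{-u}\\ i\lambda^{-1}e^{u}&-\partial u\end{pmatrix}\psi$, $\bar\partial\psi=\tfrac12\begin{pmatrix}-\bar\partial u& i\lambda e^{u}\\ ie^{-u}&\bar\partial u\end{pmatrix}\psi$, and system (Φ) is $\partial\varphi=-\tfrac12\begin{pmatrix}\partial u& i\lambda^{-1}e^{u}\\ ie^{-u}&-\partial u\end{pmatrix}\varphi$, $\bar\partial\varphi=-\tfrac12\begin{pmatrix}-\bar\partial u& ie^{-u}\\ i\lambda e^{u}&\bar\partial u\end{pmatrix}\varphi$. *)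

theory Defs
  imports "HOL-Analysis.Analysis"
begin

text \<open>We identify R^2 with the complex plane. Partial derivatives in the
real directions x and y, via the (real) Frechet derivative.\<close>

definition pdx :: "(complex \<Rightarrow> 'a::real_normed_vector) \<Rightarrow> complex \<Rightarrow> 'a" where
  "pdx f z = frechet_derivative f (at z) 1"

definition pdy :: "(complex \<Rightarrow> 'a::real_normed_vector) \<Rightarrow> complex \<Rightarrow> 'a" where
  "pdy f z = frechet_derivative f (at z) \<i>"

fun iter_pd :: "bool list \<Rightarrow> (complex \<Rightarrow> 'a::real_normed_vector) \<Rightarrow> complex \<Rightarrow> 'a" where
  "iter_pd [] f = f"
| "iter_pd (b # bs) f = (if b then pdx else pdy) (iter_pd bs f)"

definition smooth_plane :: "(complex \<Rightarrow> 'a::real_normed_vector) \<Rightarrow> bool" where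
  "smooth_plane f \<longleftrightarrow> (\<forall>ws z. iter_pd ws f differentiable (at z))"

definition wd :: "(complex \<Rightarrow> complex) \<Rightarrow> complex \<Rightarrow> complex" where
  "wd f z = (pdx f z - \<i> * pdy f z) / 2"

definition wdb :: "(complex \<Rightarrow> complex) \<Rightarrow> complex \<Rightarrow> complex" where
  "wdb f z = (pdx f z + \<i> * pdy f z) / 2"

definition cu :: "(complex \<Rightarrow> real) \<Rightarrow> complex \<Rightarrow> complex" where
  "cu u z = complex_of_real (u z)"

definition sinh_gordon :: "(complex \<Rightarrow> real) \<Rightarrow> bool" where
  "sinh_gordon u \<longleftrightarrow> smooth_plane u \<and>
     (\<forall>z. wd (wdb (cu u)) z + complex_of_real (sinh (2 * u z)) / 2 = 0)"

definition solves_Psi :: "(complex \<Rightarrow> real) \<Rightarrow> complex \<Rightarrow> (complex \<Rightarrow> complex) \<Rightarrow> (complex \<Rightarrow> complex) \<Rightarrow> bool" where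
  "solves_Psi u lam p1 p2 \<longleftrightarrow>
     (\<forall>z. p1 differentiable (at z) \<and> p2 differentiable (at z)) \<and>
     (\<forall>z. let U = cu u; ep = exp (U z); em = exp (- U z) in
        wd p1 z = (wd U z * p1 z + \<i> * em * p2 z) / 2 \<and>
        wd p2 z = (\<i> * inverse lam * ep * p1 z - wd U z * p2 z) / 2 \<and>
        wdb p1 z = (- wdb U z * p1 z + \<i> * lam * ep * p2 z) / 2 \<and>
        wdb p2 z = (\<i> * em * p1 z + wdb U z * p2 z) / 2)"

definition solves_Phi :: "(complex \<Rightarrow> real) \<Rightarrow> complex \<Rightarrow> (complex \<Rightarrow> complex) \<Rightarrow> (complex \<Rightarrow> complex) \<Rightarrow> bool" where
  "solves_Phi u lam f1 f2 \<longleftrightarrow>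
     (\<forall>z. f1 differentiable (at z) \<and> f2 differentiable (at z)) \<and>
     (\<forall>z. let U = cu u; ep = exp (U z); em = exp (- U z) in
        wd f1 z = - (wd U z * f1 z + \<i> * inverse lam * ep * f2 z) / 2 \<and>
        wd f2 z = - (\<i> * em * f1 z - wd U z * f2 z) / 2 \<and>
        wdb f1 z = - (- wdb U z * f1 z + \<i> * em * f2 z) / 2 \<and>
        wdb f2 z = - (\<i> * lam * ep * f1 z + wdb U z * f2 z) / 2)"

end

theory Submission
  imports Defs
begin

lemma fd_mult:
  fixes f g :: "complex \<Rightarrow> complex"
  assumes "f differentiable (at z)" "g differentiable (at z)"
  shows "frechet_derivative (\<lambda>x. f x * g x) (at z) h
       = f z * frechet_derivative g (at z) h + frechet_derivative f (at z) h * g z"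
proof -
  have "((\<lambda>x. f x * g x) has_derivative
        (\<lambda>h. f z * frechet_derivative g (at z) h + frechet_derivative f (at z) h * g z)) (at z)"
    using has_derivative_mult[OF frechet_derivative_works[THEN iffD1, OF assms(1)]
                                 frechet_derivative_works[THEN iffD1, OF assms(2)]] .
  from frechet_derivative_at[OF this] show ?thesis by metis
qed

lemma fd_add:
  fixes f g :: "complex \<Rightarrow> complex"
  assumes "f differentiable (at z)" "g differentiable (at z)"
  shows "frechet_derivative (\<lambda>x. f x + g x) (at z) h
       = frechet_derivative f (at z) h + frechet_derivative g (at z) h"
proof -
  have "((\<lambda>x. f x + g x) has_derivative
        (\<lambda>h. frechet_derivative f (at z) h + frechet_derivative g (at z) h)) (at z)"
    using has_derivative_add[OF frechet_derivative_works[THEN iffD1, OF assms(1)]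
                                 frechet_derivative_works[THEN iffD1, OF assms(2)]] .
  from frechet_derivative_at[OF this] show ?thesis by metis
qed

lemma fd_diff:
  fixes f g :: "complex \<Rightarrow> complex"
  assumes "f differentiable (at z)" "g differentiable (at z)"
  shows "frechet_derivative (\<lambda>x. f x - g x) (at z) h
       = frechet_derivative f (at z) h - frechet_derivative g (at z) h"
proof -
  have "((\<lambda>x. f x - g x) has_derivative
        (\<lambda>h. frechet_derivative f (at z) h - frechet_derivative g (at z) h)) (at z)"
    using has_derivative_diff[OF frechet_derivative_works[THEN iffD1, OF assms(1)]
                                 frechet_derivative_works[THEN iffD1, OF assms(2)]] .
  from frechet_derivative_at[OF this] show ?thesis by metis
qed

lemma fd_const:
  "frechet_derivative (\<lambda>x. c::complex) (at z) h = 0"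
proof -
  have "((\<lambda>x. c::complex) has_derivative (\<lambda>h. 0)) (at z)" by (rule has_derivative_const)
  from frechet_derivative_at[OF this] show ?thesis by metis
qed

lemma fd_div:
  fixes f :: "complex \<Rightarrow> complex"
  assumes "f differentiable (at z)"
  shows "frechet_derivative (\<lambda>x. f x / c) (at z) h = frechet_derivative f (at z) h / c"
proof -
  have "((\<lambda>x. f x / c) has_derivative (\<lambda>h. frechet_derivative f (at z) h / c)) (at z)"
    using has_derivative_divide'[OF frechet_derivative_works[THEN iffD1, OF assms(1)]
      has_derivative_const[of c]] by (cases "c = 0") (auto simp: field_simps)
  from frechet_derivative_at[OF this] show ?thesis by metis
qed

lemma wd_mult: "f differentiable (at z) \<Longrightarrow> g differentiable (at z) \<Longrightarrow>
  wd (\<lambda>x. f x * g x) z = f z * wd g z + wd f z * g z"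
  "f differentiable (at z) \<Longrightarrow> g differentiable (at z) \<Longrightarrow>
  wdb (\<lambda>x. f x * g x) z = f z * wdb g z + wdb f z * g z"
  by (simp_all add: wd_def wdb_def pdx_def pdy_def fd_mult field_simps)

lemma wd_add: "f differentiable (at z) \<Longrightarrow> g differentiable (at z) \<Longrightarrow>
  wd (\<lambda>x. f x + g x) z = wd f z + wd g z"
  "f differentiable (at z) \<Longrightarrow> g differentiable (at z) \<Longrightarrow>
  wdb (\<lambda>x. f x + g x) z = wdb f z + wdb g z"
  by (simp_all add: wd_def wdb_def pdx_def pdy_def fd_add field_simps)

lemma wd_diff: "f differentiable (at z) \<Longrightarrow> g differentiable (at z) \<Longrightarrow>
  wd (\<lambda>x. f x - g x) z = wd f z - wd g z"
  "f differentiable (at z) \<Longrightarrow> g differentiable (at z) \<Longrightarrow>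
  wdb (\<lambda>x. f x - g x) z = wdb f z - wdb g z"
  by (simp_all add: wd_def wdb_def pdx_def pdy_def fd_diff field_simps)

lemma wd_const: "wd (\<lambda>x. c) z = 0" "wdb (\<lambda>x. c) z = 0"
  by (simp_all add: wd_def wdb_def pdx_def pdy_def fd_const)

lemma wd_div1: "f differentiable (at z) \<Longrightarrow> wd (\<lambda>x. f x / c) z = wd f z / c"
  by (cases "c = 0") (simp_all add: wd_def wdb_def pdx_def pdy_def fd_div field_simps)

lemma wd_div2: "f differentiable (at z) \<Longrightarrow> wdb (\<lambda>x. f x / c) z = wdb f z / c"
  by (cases "c = 0") (simp_all add: wd_def wdb_def pdx_def pdy_def fd_div field_simps)

lemmas wd_div = wd_div1 wd_div2

theorem proposition3:
  fixes u :: "complex \<Rightarrow> real" and a lam :: complex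
    and psa1 psa2 pha1 pha2 ps1 ps2 :: "complex \<Rightarrow> complex"
  assumes SG: "sinh_gordon u"
    and a0: "a \<noteq> 0"
    and PSa: "solves_Psi u a psa1 psa2"
    and PHa: "solves_Phi u a pha1 pha2"
    and l0: "lam \<noteq> 0" and la: "lam \<noteq> a"
    and PS: "solves_Psi u lam ps1 ps2"
  defines "ud \<equiv> \<lambda>z. psa1 z * pha1 z - psa2 z * pha2 z"
    and "pd1 \<equiv> \<lambda>z. ((lam + a) * (psa1 z * pha1 z) * ps1 z + 2 * lam * (psa1 z * pha2 z) * ps2 z) / (lam - a)"
    and "pd2 \<equiv> \<lambda>z. (2 * a * (psa2 z * pha1 z) * ps1 z + (lam + a) * (psa2 z * pha2 z) * ps2 z) / (lam - a)"
  shows "(\<forall>z. pd1 differentiable (at z) \<and> pd2 differentiable (at z)) \<and>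
    (\<forall>z. let U = cu u; ep = exp (U z); em = exp (- U z) in
      wd pd1 z = (wd U z * pd1 z + \<i> * em * pd2 z) / 2
                 + (wd ud z * ps1 z - \<i> * ud z * em * ps2 z) / 2 \<and>
      wd pd2 z = (\<i> * inverse lam * ep * pd1 z - wd U z * pd2 z) / 2
                 + (\<i> * ud z * inverse lam * ep * ps1 z - wd ud z * ps2 z) / 2 \<and>
      wdb pd1 z = (- wdb U z * pd1 z + \<i> * lam * ep * pd2 z) / 2
                 + (- wdb ud z * ps1 z + \<i> * ud z * lam * ep * ps2 z) / 2 \<and>
      wdb pd2 z = (\<i> * em * pd1 z + wdb U z * pd2 z) / 2
                 + (- \<i> * ud z * em * ps1 z + wdb ud z * ps2 z) / 2)"
proof -
  have D: "psa1 differentiable (at z)" "psa2 differentiable (at z)"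
     "pha1 differentiable (at z)" "pha2 differentiable (at z)"
     "ps1 differentiable (at z)" "ps2 differentiable (at z)" for z
    using PSa PHa PS unfolding solves_Psi_def solves_Phi_def by auto
  have la': "lam - a \<noteq> 0" using la by simp
  have inv: "inverse a * a = 1" "inverse lam * lam = 1" "inverse (lam - a) * (lam - a) = 1"
     "inverse (2::complex) * 2 = 1"
    using a0 l0 la' by auto
  show ?thesis
  proof (intro conjI allI)
    fix z
    show "pd1 differentiable (at z)" "pd2 differentiable (at z)"
      unfolding pd1_def pd2_def using D la' by simp_all
  next
    fix z
    define U where "U = cu u"
    define ep where "ep = exp (U z)"
    define em where "em = exp (- U z)"
    have eq: "wd psa1 z = (wd U z * psa1 z + \<i> * em * psa2 z) / 2"
        "wd psa2 z = (\<i> * inverse a * ep * psa1 z - wd U z * psa2 z) / 2"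
        "wdb psa1 z = (- wdb U z * psa1 z + \<i> * a * ep * psa2 z) / 2"
        "wdb psa2 z = (\<i> * em * psa1 z + wdb U z * psa2 z) / 2"
        "wd ps1 z = (wd U z * ps1 z + \<i> * em * ps2 z) / 2"
        "wd ps2 z = (\<i> * inverse lam * ep * ps1 z - wd U z * ps2 z) / 2"
        "wdb ps1 z = (- wdb U z * ps1 z + \<i> * lam * ep * ps2 z) / 2"
        "wdb ps2 z = (\<i> * em * ps1 z + wdb U z * ps2 z) / 2"
        "wd pha1 z = - (wd U z * pha1 z + \<i> * inverse a * ep * pha2 z) / 2"
        "wd pha2 z = - (\<i> * em * pha1 z - wd U z * pha2 z) / 2"
        "wdb pha1 z = - (- wdb U z * pha1 z + \<i> * em * pha2 z) / 2"
        "wdb pha2 z = - (\<i> * a * ep * pha1 z + wdb U z * pha2 z) / 2"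
      using PSa PHa PS unfolding solves_Psi_def solves_Phi_def U_def ep_def em_def Let_def
      by auto
    have R: "wd pd1 z = ((lam + a) * (psa1 z * (pha1 z * wd ps1 z) + (psa1 z * wd pha1 z + wd psa1 z * pha1 z) * ps1 z)
          + 2 * lam * (psa1 z * (pha2 z * wd ps2 z) + (psa1 z * wd pha2 z + wd psa1 z * pha2 z) * ps2 z)) / (lam - a)"
      unfolding pd1_def using D by (simp add: wd_mult wd_add wd_div wd_const algebra_simps)
    have R2: "wd pd2 z = (2 * a * (psa2 z * (pha1 z * wd ps1 z) + (psa2 z * wd pha1 z + wd psa2 z * pha1 z) * ps1 z)
          + (lam + a) * (psa2 z * (pha2 z * wd ps2 z) + (psa2 z * wd pha2 z + wd psa2 z * pha2 z) * ps2 z)) / (lam - a)"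
      unfolding pd2_def using D by (simp add: wd_mult wd_add wd_div wd_const algebra_simps)
    have W: "wd ud z = psa1 z * wd pha1 z + wd psa1 z * pha1 z - (psa2 z * wd pha2 z + wd psa2 z * pha2 z)"
      unfolding ud_def using D by (simp add: wd_mult wd_diff)
    have R3: "wdb pd1 z = ((lam + a) * (psa1 z * (pha1 z * wdb ps1 z) + (psa1 z * wdb pha1 z + wdb psa1 z * pha1 z) * ps1 z)
          + 2 * lam * (psa1 z * (pha2 z * wdb ps2 z) + (psa1 z * wdb pha2 z + wdb psa1 z * pha2 z) * ps2 z)) / (lam - a)"
      unfolding pd1_def using D by (simp add: wd_mult wd_add wd_div wd_const algebra_simps)
    have R4: "wdb pd2 z = (2 * a * (psa2 z * (pha1 z * wdb ps1 z) + (psa2 z * wdb pha1 z + wdb psa2 z * pha1 z) * ps1 z)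
          + (lam + a) * (psa2 z * (pha2 z * wdb ps2 z) + (psa2 z * wdb pha2 z + wdb psa2 z * pha2 z) * ps2 z)) / (lam - a)"
      unfolding pd2_def using D by (simp add: wd_mult wd_add wd_div wd_const algebra_simps)
    have W2: "wdb ud z = psa1 z * wdb pha1 z + wdb psa1 z * pha1 z - (psa2 z * wdb pha2 z + wdb psa2 z * pha2 z)"
      unfolding ud_def using D by (simp add: wd_mult wd_diff)
    have E1: "wd pd1 z = (wd U z * pd1 z + \<i> * em * pd2 z) / 2
                 + (wd ud z * ps1 z - \<i> * ud z * em * ps2 z) / 2"
      unfolding R W eq unfolding pd1_def pd2_def ud_def using l0 a0 la'
      apply (simp add: divide_simps)
      by algebra
    have E2: "wd pd2 z = (\<i> * inverse lam * ep * pd1 z - wd U z * pd2 z) / 2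
                 + (\<i> * ud z * inverse lam * ep * ps1 z - wd ud z * ps2 z) / 2"
      unfolding R2 W eq unfolding pd1_def pd2_def ud_def using l0 a0 la'
      apply (simp add: divide_simps)
      by algebra
    have E3: "wdb pd1 z = (- wdb U z * pd1 z + \<i> * lam * ep * pd2 z) / 2
                 + (- wdb ud z * ps1 z + \<i> * ud z * lam * ep * ps2 z) / 2"
      unfolding R3 W2 eq unfolding pd1_def pd2_def ud_def using l0 a0 la'
      apply (simp add: divide_simps)
      by algebra
    have E4: "wdb pd2 z = (\<i> * em * pd1 z + wdb U z * pd2 z) / 2
                 + (- \<i> * ud z * em * ps1 z + wdb ud z * ps2 z) / 2"
      unfolding R4 W2 eq unfolding pd1_def pd2_def ud_def using l0 a0 la'
      apply (simp add: divide_simps)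
      by algebra
    show "let U = cu u; ep = exp (U z); em = exp (- U z) in
      wd pd1 z = (wd U z * pd1 z + \<i> * em * pd2 z) / 2
                 + (wd ud z * ps1 z - \<i> * ud z * em * ps2 z) / 2 \<and>
      wd pd2 z = (\<i> * inverse lam * ep * pd1 z - wd U z * pd2 z) / 2
                 + (\<i> * ud z * inverse lam * ep * ps1 z - wd ud z * ps2 z) / 2 \<and>
      wdb pd1 z = (- wdb U z * pd1 z + \<i> * lam * ep * pd2 z) / 2
                 + (- wdb ud z * ps1 z + \<i> * ud z * lam * ep * ps2 z) / 2 \<and>
      wdb pd2 z = (\<i> * em * pd1 z + wdb U z * pd2 z) / 2
                 + (- \<i> * ud z * em * ps1 z + wdb ud z * ps2 z) / 2"
      unfolding Let_def U_def[symmetric] ep_def[symmetric] em_def[symmetric]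
      using E1 E2 E3 E4 by blast
  qed
qed

end
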